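(* Let $w\in W_+$ and let $\ell\in\{1,\dots,m\}$ be such that $w\theta_\ell\neq\theta$. Then $\theta\notin wR_\ell$.
   Context: $R$ is an irreducible reduced root system in $V=\mathbb C^n$ with Weyl group $W$, positive roots $R_+$, simple roots $\Delta=\{\alpha_1,\dots,\alpha_n\}$ and maximal root $\theta$ (with respect to $\Delta$). Fix $S_0\subset\Delta$, $W_+=\{w\in W:wS_0\subset R_+\}$, $V_0=\mathrm{span}(S_0)$, and let $R_0=V_0\cap R$ (a root system with simple roots $S_0$) decompose into irreducible components $R_0=\bigsqcup_{\ell=1}^m R_\ell$; $S_\ell=S_0\cap R_\ell$ and $\theta_\ell$ is the maximal root of $R_\ell$ with respect to $S_\ell$. *)

theory Defs
  imports "HOL-Analysis.Analysis"
begin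

text \<open>Root systems in V = complex^'n (Bourbaki-style: a root system is a finite spanning
set R not containing 0, together with coroots cor a, which are complex-linear forms with
cor a a = 2, such that the reflection x - cor a x a maps R onto R and cor a b is an
integer for all roots a, b).\<close>

type_synonym 'n V = "complex ^ 'n"

definition refl :: "('n::finite V \<Rightarrow> complex) \<Rightarrow> 'n V \<Rightarrow> 'n V \<Rightarrow> 'n V" where
  "refl f a x = x - (f x) *s a"

definition root_system :: "'n::finite V set \<Rightarrow> ('n V \<Rightarrow> 'n V \<Rightarrow> complex) \<Rightarrow> bool" where
  "root_system R cor \<longleftrightarrow> finite R \<and> 0 \<notin> R \<and> vec.span R = UNIV \<and>
     (\<forall>a\<in>R. (\<forall>x y. cor a (x + y) = cor a x + cor a y) \<and>
             (\<forall>(c::complex) x. cor a (c *s x) = c * cor a x) \<and>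
             cor a a = 2 \<and>
             refl (cor a) a ` R = R \<and>
             (\<forall>b\<in>R. cor a b \<in> \<int>))"

definition reduced :: "'n::finite V set \<Rightarrow> bool" where
  "reduced R \<longleftrightarrow> (\<forall>a\<in>R. \<forall>c::complex. c *s a \<in> R \<longrightarrow> c = 1 \<or> c = -1)"

definition irreducible_rs :: "'n::finite V set \<Rightarrow> ('n V \<Rightarrow> 'n V \<Rightarrow> complex) \<Rightarrow> bool" where
  "irreducible_rs R cor \<longleftrightarrow> R \<noteq> {} \<and>
     \<not> (\<exists>R1 R2. R1 \<noteq> {} \<and> R2 \<noteq> {} \<and> R = R1 \<union> R2 \<and> R1 \<inter> R2 = {} \<and>
              (\<forall>a\<in>R1. \<forall>b\<in>R2. cor a b = 0))"

inductive_set weyl :: "'n::finite V set \<Rightarrow> ('n V \<Rightarrow> 'n V \<Rightarrow> complex) \<Rightarrow> ('n V \<Rightarrow> 'n V) set"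
  for R cor where
  weyl_id: "id \<in> weyl R cor"
| weyl_step: "a \<in> R \<Longrightarrow> w \<in> weyl R cor \<Longrightarrow> refl (cor a) a \<circ> w \<in> weyl R cor"

definition nonneg_int_comb :: "'n::finite V set \<Rightarrow> 'n V \<Rightarrow> bool" where
  "nonneg_int_comb S x \<longleftrightarrow> (\<exists>k::'n V \<Rightarrow> nat. x = (\<Sum>d\<in>S. of_nat (k d) *s d))"

definition is_base :: "'n::finite V set \<Rightarrow> 'n V set \<Rightarrow> bool" where
  "is_base R \<Delta> \<longleftrightarrow> \<Delta> \<subseteq> R \<and> vec.independent \<Delta> \<and>
     (\<forall>a\<in>R. \<exists>k::'n V \<Rightarrow> int. a = (\<Sum>d\<in>\<Delta>. of_int (k d) *s d) \<and>
                ((\<forall>d\<in>\<Delta>. k d \<ge> 0) \<or> (\<forall>d\<in>\<Delta>. k d \<le> 0)))"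

definition pos_roots :: "'n::finite V set \<Rightarrow> 'n V set \<Rightarrow> 'n V set" where
  "pos_roots R \<Delta> = {a\<in>R. nonneg_int_comb \<Delta> a}"

definition highest_root :: "'n::finite V set \<Rightarrow> 'n V set \<Rightarrow> 'n V \<Rightarrow> bool" where
  "highest_root R \<Delta> \<theta> \<longleftrightarrow> \<theta> \<in> R \<and> (\<forall>a\<in>R. nonneg_int_comb \<Delta> (\<theta> - a))"

definition irred_component :: "'n::finite V set \<Rightarrow> ('n V \<Rightarrow> 'n V \<Rightarrow> complex) \<Rightarrow> 'n V set \<Rightarrow> bool" where
  "irred_component R0 cor C \<longleftrightarrow> C \<subseteq> R0 \<and> (\<forall>a\<in>C. \<forall>b\<in>R0 - C. cor a b = 0) \<and>
     irreducible_rs C cor"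

end

theory Submission
  imports Defs
begin

lemma weyl_props:
  assumes rs: "root_system R cor" and w: "w \<in> weyl R cor"
  shows "(\<forall>x y. w (x + y) = w x + w y) \<and> (\<forall>(c::complex) x. w (c *s x) = c *s w x) \<and> w ` R \<subseteq> R"
  using w
proof induction
  case weyl_id then show ?case by auto
next
  case (weyl_step a w)
  have add: "\<And>x y. cor a (x + y) = cor a x + cor a y" and hom: "\<And>c x. cor a (c *s x) = c * cor a x"
    and im: "refl (cor a) a ` R = R"
    using rs weyl_step(1) unfolding root_system_def by auto
  have "\<forall>x y. refl (cor a) a (x + y) = refl (cor a) a x + refl (cor a) a y"
    by (auto simp: refl_def add vector_sadd_rdistrib algebra_simps)
  moreover have "\<forall>(c::complex) x. refl (cor a) a (c *s x) = c *s refl (cor a) a x"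
    by (auto simp: refl_def hom vector_ssub_ldistrib)
  ultimately show ?case using weyl_step(3) im by (auto simp: image_subset_iff)
qed

lemma add_diff_lin:
  fixes w :: "complex^'n \<Rightarrow> complex^'m"
  assumes "\<forall>x y. w (x + y) = w x + w y"
  shows "w (x - y) = w x - w y"
proof -
  have "w x = w ((x - y) + y)" by simp
  also have "\<dots> = w (x - y) + w y" using assms by blast
  finally show ?thesis by (simp add: algebra_simps)
qed

lemma add_sum_lin:
  assumes "\<forall>x y. w (x + y) = w x + w y" "finite A"
  shows "w (\<Sum>d\<in>A. f d) = (\<Sum>d\<in>A. w (f d :: complex^'n) :: complex^'m)"
  using assms(2)
proof induction
  case empty
  have "w 0 = w 0 + w 0" using assms(1) by (metis add.right_neutral)
  then show ?case by simp
next
  case (insert x F) then show ?case using assms(1) by simp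
qed

lemma nic_add:
  assumes "nonneg_int_comb S x" "nonneg_int_comb S y"
  shows "nonneg_int_comb S (x + y)"
proof -
  obtain k l where "x = (\<Sum>d\<in>S. of_nat (k d) *s d)" "y = (\<Sum>d\<in>S. of_nat (l d) *s d)"
    using assms unfolding nonneg_int_comb_def by auto
  then have "x + y = (\<Sum>d\<in>S. of_nat (k d + l d) *s d)"
    by (simp add: sum.distrib vector_sadd_rdistrib)
  then show ?thesis unfolding nonneg_int_comb_def by (intro exI[of _ "\<lambda>d. k d + l d"])
qed

lemma nic_zero: "nonneg_int_comb S 0"
  unfolding nonneg_int_comb_def by (rule exI[of _ "\<lambda>_. 0"]) simp

lemma nic_scale:
  assumes "nonneg_int_comb S x"
  shows "nonneg_int_comb S (of_nat n *s x)"
proof -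
  obtain k where "x = (\<Sum>d\<in>S. of_nat (k d) *s d)"
    using assms unfolding nonneg_int_comb_def by auto
  then have "of_nat n *s x = (\<Sum>d\<in>S. of_nat (n * k d) *s d)"
    by (simp add: vector_smult_assoc vec.scale_sum_right)
  then show ?thesis unfolding nonneg_int_comb_def by (intro exI[of _ "\<lambda>d. n * k d"])
qed

lemma nic_sum:
  assumes "finite A" "\<forall>d\<in>A. nonneg_int_comb S (f d)"
  shows "nonneg_int_comb S (\<Sum>d\<in>A. f d)"
  using assms by induction (auto simp: nic_zero nic_add)

theorem mainTheorem4:
  fixes R :: "(complex ^ 'n::finite) set"
    and cor :: "complex ^ 'n \<Rightarrow> complex ^ 'n \<Rightarrow> complex"
    and \<Delta> S0 Rl :: "(complex ^ 'n) set"
    and \<theta> \<theta>l :: "complex ^ 'n"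
    and w :: "complex ^ 'n \<Rightarrow> complex ^ 'n"
  assumes "root_system R cor" and "reduced R" and "irreducible_rs R cor"
    and "is_base R \<Delta>" and "highest_root R \<Delta> \<theta>"
    and "S0 \<subseteq> \<Delta>"
    and "w \<in> weyl R cor" and "w ` S0 \<subseteq> pos_roots R \<Delta>"
    and "irred_component (vec.span S0 \<inter> R) cor Rl"
    and "highest_root Rl (S0 \<inter> Rl) \<theta>l"
    and "w \<theta>l \<noteq> \<theta>"
  shows "\<theta> \<notin> w ` Rl"
proof
  assume "\<theta> \<in> w ` Rl"
  then obtain \<beta> where b: "\<beta> \<in> Rl" "\<theta> = w \<beta>" by auto
  have finR: "finite R" using assms(1) unfolding root_system_def by auto
  have D: "\<Delta> \<subseteq> R" "vec.independent \<Delta>" using assms(4) unfolding is_base_def by auto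
  have finD: "finite \<Delta>" using finR D(1) finite_subset by blast
  have finS: "finite (S0 \<inter> Rl)" using finD assms(6) finite_subset by blast
  have RlR: "Rl \<subseteq> R" using assms(9) unfolding irred_component_def by auto
  have tl: "\<theta>l \<in> Rl" using assms(10) unfolding highest_root_def by auto
  have wp: "(\<forall>x y. w (x + y) = w x + w y) \<and> (\<forall>(c::complex) x. w (c *s x) = c *s w x) \<and> w ` R \<subseteq> R"
    by (rule weyl_props[OF assms(1,7)])
  have wtl: "w \<theta>l \<in> R" using wp tl RlR by (auto simp: image_subset_iff)
  obtain k where k: "\<theta>l - \<beta> = (\<Sum>d\<in>S0 \<inter> Rl. of_nat (k d) *s d)"
    using assms(10) b(1) unfolding highest_root_def nonneg_int_comb_def by auto
  have wadd: "\<forall>x y. w (x + y) = w x + w y" and wsc: "\<And>c x. w (c *s x) = c *s w x"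
    using wp by auto
  have "w \<theta>l - \<theta> = w (\<theta>l - \<beta>)" unfolding b(2) by (rule add_diff_lin[OF wadd, symmetric])
  also have "\<dots> = (\<Sum>d\<in>S0 \<inter> Rl. w (of_nat (k d) *s d))"
    unfolding k by (rule add_sum_lin[OF wadd finS])
  also have "\<dots> = (\<Sum>d\<in>S0 \<inter> Rl. of_nat (k d) *s w d)"
    by (simp only: wsc)
  finally have eq: "w \<theta>l - \<theta> = (\<Sum>d\<in>S0 \<inter> Rl. of_nat (k d) *s w d)" .
  have "nonneg_int_comb \<Delta> (w \<theta>l - \<theta>)"
    unfolding eq
  proof (rule nic_sum[OF finS], rule ballI)
    fix d assume "d \<in> S0 \<inter> Rl"
    then have "nonneg_int_comb \<Delta> (w d)" using assms(8) unfolding pos_roots_def by auto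
    then show "nonneg_int_comb \<Delta> (of_nat (k d) *s w d)" by (rule nic_scale)
  qed
  then obtain q where q: "w \<theta>l - \<theta> = (\<Sum>d\<in>\<Delta>. of_nat (q d) *s d)"
    unfolding nonneg_int_comb_def by auto
  obtain p where p: "\<theta> - w \<theta>l = (\<Sum>d\<in>\<Delta>. of_nat (p d) *s d)"
    using assms(5) wtl unfolding highest_root_def nonneg_int_comb_def by auto
  have "(\<Sum>d\<in>\<Delta>. of_nat (p d + q d) *s d) = (\<Sum>d\<in>\<Delta>. of_nat (p d) *s d) + (\<Sum>d\<in>\<Delta>. of_nat (q d) *s d)"
    by (simp add: sum.distrib vector_sadd_rdistrib)
  also have "\<dots> = (0::complex^'n)" unfolding p[symmetric] q[symmetric] by simp
  finally have z: "(\<Sum>d\<in>\<Delta>. (\<lambda>d. of_nat (p d + q d)) d *s d) = (0::complex^'n)" .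
  have "\<forall>d\<in>\<Delta>. (of_nat (p d + q d) :: complex) = 0"
  proof (rule ccontr)
    assume "\<not> ?thesis"
    then obtain d where "d \<in> \<Delta>" "(of_nat (p d + q d) :: complex) \<noteq> 0" by blast
    then have "vec.dependent \<Delta>"
      unfolding vec.dependent_finite[OF finD]
      by (intro exI[of _ "\<lambda>d. of_nat (p d + q d)"] conjI bexI[of _ d] z)
    then show False using D(2) by simp
  qed
  then have "\<forall>d\<in>\<Delta>. q d = 0" by (simp del: of_nat_add add: of_nat_add[symmetric])
  then have "w \<theta>l - \<theta> = 0" unfolding q by (intro sum.neutral) simp
  then show False using assms(11) by simp
qed

end
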